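(* Consider the upper half-space model $\mathbb{H}^3=\{(x_1,x_2,x_3)\in\mathbb{R}^3: x_3>0\}$ with metric $g=\frac{1}{x_3^2}(dx_1^2+dx_2^2+dx_3^2)$. Let $E$ be a complete, non-parabolic end of revolution in $\mathbb{H}^3$ about the $x_3$-axis. Then $\inf_{p\in E}x_3(p)=0$.
   Context: A complete end of revolution about the $x_3$-axis is the set $E=\{(\gamma_1(s)\cos\theta,\gamma_1(s)\sin\theta,\gamma_2(s)): s\ge0,\ \theta\in[0,2\pi)\}$, where $\gamma(s)=(\gamma_1(s),0,\gamma_2(s))$, $s\in[0,\infty)$, is a smooth regular curve with $\gamma_1>0$, $\gamma_2>0$ and infinite hyperbolic length; $E$ carries the induced metric. An end $E$ is parabolic if every bounded harmonic function on $E$ is determined by its boundary values; otherwise it is non-parabolic. *)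

theory Defs
  imports "HOL-Analysis.Analysis"
begin

definition smooth_real :: "(real \<Rightarrow> real) \<Rightarrow> bool" where
  "smooth_real f \<longleftrightarrow> (\<forall>k x. ((deriv ^^ k) f) differentiable (at x))"

text \<open>Profile curve gamma(s) = (g1 s, 0, g2 s), s \<ge> 0, in the upper half-space model.
  Hyperbolic speed |gamma'|_hyp = sqrt(g1'^2 + g2'^2) / g2.\<close>
definition hyp_speed :: "(real \<Rightarrow> real) \<Rightarrow> (real \<Rightarrow> real) \<Rightarrow> real \<Rightarrow> real" where
  "hyp_speed g1 g2 s = sqrt ((deriv g1 s)\<^sup>2 + (deriv g2 s)\<^sup>2) / g2 s"

definition complete_end_curve :: "(real \<Rightarrow> real) \<Rightarrow> (real \<Rightarrow> real) \<Rightarrow> bool" where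
  "complete_end_curve g1 g2 \<longleftrightarrow>
     smooth_real g1 \<and> smooth_real g2 \<and>
     (\<forall>s\<ge>0. g1 s > 0 \<and> g2 s > 0 \<and> (deriv g1 s)\<^sup>2 + (deriv g2 s)\<^sup>2 > 0) \<and>
     filterlim (\<lambda>T. integral {0..T} (hyp_speed g1 g2)) at_top at_top"

definition end_set :: "(real \<Rightarrow> real) \<Rightarrow> (real \<Rightarrow> real) \<Rightarrow> (real \<times> real \<times> real) set" where
  "end_set g1 g2 = {(g1 s * cos \<theta>, g1 s * sin \<theta>, g2 s) | s \<theta>. s \<ge> 0 \<and> \<theta> \<in> {0..<2*pi}}"

text \<open>Induced metric in the coordinates (s, theta):
  g = G11 ds^2 + G22 dtheta^2.\<close>
definition G11 :: "(real \<Rightarrow> real) \<Rightarrow> (real \<Rightarrow> real) \<Rightarrow> real \<Rightarrow> real" where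
  "G11 g1 g2 s = ((deriv g1 s)\<^sup>2 + (deriv g2 s)\<^sup>2) / (g2 s)\<^sup>2"

definition G22 :: "(real \<Rightarrow> real) \<Rightarrow> (real \<Rightarrow> real) \<Rightarrow> real \<Rightarrow> real" where
  "G22 g1 g2 s = (g1 s)\<^sup>2 / (g2 s)\<^sup>2"

definition pd_s :: "(real \<times> real \<Rightarrow> real) \<Rightarrow> real \<times> real \<Rightarrow> real" where
  "pd_s u p = deriv (\<lambda>t. u (t, snd p)) (fst p)"

definition pd_t :: "(real \<times> real \<Rightarrow> real) \<Rightarrow> real \<times> real \<Rightarrow> real" where
  "pd_t u p = deriv (\<lambda>t. u (fst p, t)) (snd p)"

definition has_partials_on :: "(real \<times> real \<Rightarrow> real) \<Rightarrow> (real \<times> real) set \<Rightarrow> bool" where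
  "has_partials_on u S \<longleftrightarrow>
     (\<forall>p\<in>S. (\<lambda>t. u (t, snd p)) differentiable (at (fst p)) \<and>
            (\<lambda>t. u (fst p, t)) differentiable (at (snd p)))"

definition C2_on :: "(real \<times> real \<Rightarrow> real) \<Rightarrow> (real \<times> real) set \<Rightarrow> bool" where
  "C2_on u S \<longleftrightarrow>
     has_partials_on u S \<and> has_partials_on (pd_s u) S \<and> has_partials_on (pd_t u) S \<and>
     continuous_on S u \<and> continuous_on S (pd_s u) \<and> continuous_on S (pd_t u) \<and>
     continuous_on S (pd_s (pd_s u)) \<and> continuous_on S (pd_t (pd_s u)) \<and>
     continuous_on S (pd_s (pd_t u)) \<and> continuous_on S (pd_t (pd_t u))"

definition laplacian_E ::
  "(real \<Rightarrow> real) \<Rightarrow> (real \<Rightarrow> real) \<Rightarrow> (real \<times> real \<Rightarrow> real) \<Rightarrow> real \<times> real \<Rightarrow> real" where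
  "laplacian_E g1 g2 u p =
     (let sg = (\<lambda>s. sqrt (G11 g1 g2 s * G22 g1 g2 s)) in
      (1 / sg (fst p)) *
      (pd_s (\<lambda>q. sg (fst q) / G11 g1 g2 (fst q) * pd_s u q) p +
       pd_t (\<lambda>q. sg (fst q) / G22 g1 g2 (fst q) * pd_t u q) p))"

text \<open>Bounded harmonic functions on E, written in the coordinates (s, theta):
  2pi-periodic in theta (i.e. functions on E), continuous on E = {s \<ge> 0},
  C^2 and harmonic in the interior {s > 0}, and bounded.\<close>
definition bounded_harmonic_on_end ::
  "(real \<Rightarrow> real) \<Rightarrow> (real \<Rightarrow> real) \<Rightarrow> (real \<times> real \<Rightarrow> real) \<Rightarrow> bool" where
  "bounded_harmonic_on_end g1 g2 u \<longleftrightarrow>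
     (\<forall>s \<theta>. u (s, \<theta> + 2*pi) = u (s, \<theta>)) \<and>
     continuous_on {p. fst p \<ge> 0} u \<and>
     C2_on u {p. fst p > 0} \<and>
     (\<forall>p. fst p > 0 \<longrightarrow> laplacian_E g1 g2 u p = 0) \<and>
     (\<exists>B. \<forall>p. fst p \<ge> 0 \<longrightarrow> \<bar>u p\<bar> \<le> B)"

definition parabolic_end :: "(real \<Rightarrow> real) \<Rightarrow> (real \<Rightarrow> real) \<Rightarrow> bool" where
  "parabolic_end g1 g2 \<longleftrightarrow>
     (\<forall>u v. bounded_harmonic_on_end g1 g2 u \<and> bounded_harmonic_on_end g1 g2 v \<and>
            (\<forall>\<theta>. u (0, \<theta>) = v (0, \<theta>)) \<longrightarrow>
            (\<forall>p. fst p \<ge> 0 \<longrightarrow> u p = v p))"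

end

theory Submission
  imports Defs
begin

lemma second_deriv_max:
  fixes f D :: "real \<Rightarrow> real"
  assumes r: "r > 0"
    and fd: "\<And>y. y \<in> ball x r \<Longrightarrow> (f has_real_derivative D y) (at y)"
    and Dd: "(D has_real_derivative c) (at x)"
    and mx: "\<And>y. y \<in> ball x r \<Longrightarrow> f y \<le> f x"
  shows "D x = 0 \<and> c \<le> 0"
proof -
  have D0: "D x = 0"
    using DERIV_local_max[OF fd[of x] r] mx r by (auto simp: dist_real_def)
  moreover have "c \<le> 0"
  proof (rule ccontr)
    assume "\<not> c \<le> 0"
    then have "c > 0" by simp
    from DERIV_pos_inc_right[OF Dd this] obtain d where d: "d > 0"
      "\<And>h. h > 0 \<Longrightarrow> h < d \<Longrightarrow> D x < D (x + h)" by blast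
    define h where "h = min d r / 2"
    have h: "h > 0" "h < d" "h < r" using d r by (auto simp: h_def)
    have sub: "\<And>y. x \<le> y \<Longrightarrow> y \<le> x + h \<Longrightarrow> y \<in> ball x r"
      using h by (auto simp: dist_real_def)
    have pos: "\<exists>l. DERIV f y :> l \<and> 0 < l" if y: "x < y" "y < x + h" for y
    proof -
      have "D x < D (x + (y - x))" using d(2)[of "y - x"] y h by simp
      then show ?thesis using fd[of y] sub[of y] y D0 by auto
    qed
    have cont: "continuous_on {x..x + h} f"
      by (rule continuous_at_imp_continuous_on) (meson DERIV_isCont atLeastAtMost_iff fd sub)
    have "f x < f (x + h)"
      using DERIV_pos_imp_increasing_open[of x "x+h" f] pos cont h by auto
    moreover have "f (x + h) \<le> f x" using mx sub[of "x+h"] h by simp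
    ultimately show False by simp
  qed
  ultimately show ?thesis by simp
qed


lemma sm0: "smooth_real f \<Longrightarrow> f differentiable (at x)"
  unfolding smooth_real_def by (metis funpow_0)
lemma sm1: "smooth_real f \<Longrightarrow> deriv f differentiable (at x)"
  unfolding smooth_real_def by (drule spec[of _ 1]) simp

definition Acoef :: "(real \<Rightarrow> real) \<Rightarrow> (real \<Rightarrow> real) \<Rightarrow> real \<Rightarrow> real" where
  "Acoef g1 g2 t = sqrt (G11 g1 g2 t * G22 g1 g2 t) / G11 g1 g2 t"
definition Bcoef :: "(real \<Rightarrow> real) \<Rightarrow> (real \<Rightarrow> real) \<Rightarrow> real \<Rightarrow> real" where
  "Bcoef g1 g2 t = sqrt (G11 g1 g2 t * G22 g1 g2 t) / G22 g1 g2 t"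

lemma pos_facts:
  assumes "complete_end_curve g1 g2" "t \<ge> 0"
  shows "G11 g1 g2 t > 0" "G22 g1 g2 t > 0" "sqrt (G11 g1 g2 t * G22 g1 g2 t) > 0"
    "Acoef g1 g2 t > 0" "Bcoef g1 g2 t > 0"
proof -
  have h: "g1 t > 0" "g2 t > 0" "(deriv g1 t)\<^sup>2 + (deriv g2 t)\<^sup>2 > 0"
    using assms unfolding complete_end_curve_def by auto
  show 1: "G11 g1 g2 t > 0" using h by (simp add: G11_def)
  show 2: "G22 g1 g2 t > 0" using h by (simp add: G22_def)
  show 3: "sqrt (G11 g1 g2 t * G22 g1 g2 t) > 0" using 1 2 by simp
  show "Acoef g1 g2 t > 0" using 1 3 by (simp add: Acoef_def)
  show "Bcoef g1 g2 t > 0" using 2 3 by (simp add: Bcoef_def)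
qed

lemma sqrt_diff:
  fixes h :: "real \<Rightarrow> real"
  assumes "h differentiable (at t)" "h t > 0"
  shows "(\<lambda>x. sqrt (h x)) differentiable (at t)"
proof -
  from assms(1) obtain D where "(h has_real_derivative D) (at t)"
    using real_differentiable_def by blast
  from DERIV_chain2[OF DERIV_real_sqrt[OF assms(2)] this] show ?thesis
    using real_differentiable_def by blast
qed

lemma A_diff:
  assumes "complete_end_curve g1 g2" "t \<ge> 0"
  shows "Acoef g1 g2 differentiable (at t)"
proof -
  have sm: "smooth_real g1" "smooth_real g2" using assms unfolding complete_end_curve_def by auto
  have g2t: "g2 t \<noteq> 0" using assms unfolding complete_end_curve_def by force
  have d1: "G11 g1 g2 differentiable (at t)"
    unfolding G11_def[abs_def]
    using sm0[OF sm(2)] sm1[OF sm(1)] sm1[OF sm(2)] g2t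
    by (intro differentiable_divide differentiable_add differentiable_power) auto
  have d2: "G22 g1 g2 differentiable (at t)"
    unfolding G22_def[abs_def]
    using sm0[OF sm(2)] sm0[OF sm(1)] g2t
    by (intro differentiable_divide differentiable_add differentiable_power) auto
  have d3: "(\<lambda>x. sqrt (G11 g1 g2 x * G22 g1 g2 x)) differentiable (at t)"
    using pos_facts[OF assms] d1 d2 by (intro sqrt_diff differentiable_mult) auto
  show ?thesis unfolding Acoef_def[abs_def]
    using d1 d3 pos_facts[OF assms] by (intro differentiable_divide) auto
qed

lemma invA:
  assumes "complete_end_curve g1 g2" "t \<ge> 0"
  shows "1 / Acoef g1 g2 t = sqrt ((deriv g1 t)\<^sup>2 + (deriv g2 t)\<^sup>2) / g1 t"
proof -
  have h: "g1 t > 0" "g2 t > 0" "(deriv g1 t)\<^sup>2 + (deriv g2 t)\<^sup>2 > 0"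
    using assms unfolding complete_end_curve_def by auto
  define Q where "Q = (deriv g1 t)\<^sup>2 + (deriv g2 t)\<^sup>2"
  have Q: "Q > 0" using h Q_def by simp
  have "G11 g1 g2 t * G22 g1 g2 t = (sqrt Q * g1 t / (g2 t)^2)^2"
    using Q by (simp add: G11_def G22_def Q_def power_divide power_mult_distrib field_simps)
  then have s: "sqrt (G11 g1 g2 t * G22 g1 g2 t) = sqrt Q * g1 t / (g2 t)^2"
    using h Q by simp
  have g: "G11 g1 g2 t = Q / (g2 t)^2" by (simp add: G11_def Q_def)
  have qq: "Q = sqrt Q * sqrt Q" using Q by simp
  have "Acoef g1 g2 t = g1 t / sqrt Q" unfolding Acoef_def s unfolding g
    using h Q by (subst (2) qq) (simp add: field_simps)
  then show ?thesis using Q_def by simp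
qed


lemma A_cont:
  assumes "complete_end_curve g1 g2"
  shows "continuous_on {0..T} (\<lambda>t. (a + b * t) / Acoef g1 g2 t)"
proof (rule continuous_at_imp_continuous_on, intro ballI)
  fix t assume t: "t \<in> {0..T}"
  then have "t \<ge> 0" by simp
  have "isCont (Acoef g1 g2) t"
    using A_diff[OF assms \<open>t \<ge> 0\<close>] by (simp add: differentiable_imp_continuous_within)
  then show "isCont (\<lambda>t. (a + b * t) / Acoef g1 g2 t) t"
    using pos_facts(4)[OF assms \<open>t \<ge> 0\<close>] by (intro continuous_intros) auto
qed

lemma ind_deriv:
  fixes k :: "real \<Rightarrow> real"
  assumes "\<And>T. continuous_on {0..T} k" "t > 0"
  shows "((\<lambda>T. integral {0..T} k) has_real_derivative k t) (at t)"
proof -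
  have "((\<lambda>T. integral {0..T} k) has_real_derivative k t) (at t within {0..t+1})"
    using integral_has_real_derivative[OF assms(1)[of "t+1"]] assms(2) by simp
  moreover have "at t within {0..t+1} = at t" using assms(2) by (intro at_within_Icc_at) auto
  ultimately show ?thesis by simp
qed

lemma ind_mono:
  fixes k :: "real \<Rightarrow> real"
  assumes "\<And>T. continuous_on {0..T} k" "\<And>t. t \<ge> 0 \<Longrightarrow> k t \<ge> 0" "0 \<le> T" "T \<le> T'"
  shows "integral {0..T} k \<le> integral {0..T'} k"
proof -
  have i: "k integrable_on {0..T'}" by (rule integrable_continuous_interval[OF assms(1)])
  have "integral {0..T} k + integral {T..T'} k = integral {0..T'} k"
    by (rule Henstock_Kurzweil_Integration.integral_combine[OF assms(3,4) i])
  moreover have "integral {T..T'} k \<ge> 0"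
    using assms by (intro integral_nonneg integrable_continuous_interval continuous_on_subset[OF assms(1)[of T']]) auto
  ultimately show ?thesis by simp
qed

lemma ind_nonneg:
  fixes k :: "real \<Rightarrow> real"
  assumes "\<And>T. continuous_on {0..T} k" "\<And>t. t \<ge> 0 \<Longrightarrow> k t \<ge> 0"
  shows "integral {0..T} k \<ge> 0"
  using assms by (intro integral_nonneg integrable_continuous_interval) auto



lemma A_cont1:
  assumes "complete_end_curve g1 g2"
  shows "continuous_on {0..T} (\<lambda>t. 1 / Acoef g1 g2 t)"
  using A_cont[OF assms, of T 1 0] by simp

lemma hyp_cont:
  assumes "complete_end_curve g1 g2"
  shows "continuous_on {0..T} (hyp_speed g1 g2)"
proof (rule continuous_at_imp_continuous_on, intro ballI)
  fix t assume t: "t \<in> {0..T}"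
  have sm: "smooth_real g1" "smooth_real g2" and g2: "g2 t > 0"
    using assms t unfolding complete_end_curve_def by auto
  have c: "isCont (deriv g1) t" "isCont (deriv g2) t" "isCont g2 t"
    using sm1[OF sm(1)] sm1[OF sm(2)] sm0[OF sm(2)]
    by (auto simp: differentiable_imp_continuous_within)
  show "isCont (hyp_speed g1 g2) t"
    unfolding hyp_speed_def[abs_def] using c g2
    by (intro continuous_intros) auto
qed

lemma H_div:
  assumes cec: "complete_end_curve g1 g2" and c: "c > 0" and lb: "\<And>s. s \<ge> 0 \<Longrightarrow> g2 s \<ge> c"
  shows "filterlim (\<lambda>T. integral {0..T} (\<lambda>t. 1 / Acoef g1 g2 t)) at_top at_top"
  unfolding filterlim_at_top
proof
  fix Z :: real
  let ?H = "\<lambda>T. integral {0..T} (\<lambda>t. 1 / Acoef g1 g2 t)"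
  have nn: "\<And>t. t \<ge> 0 \<Longrightarrow> 1 / Acoef g1 g2 t \<ge> 0" using pos_facts(4)[OF cec] by (simp add: less_imp_le)
  show "eventually (\<lambda>T. Z \<le> ?H T) at_top"
  proof (cases "\<exists>T0\<ge>0. Z \<le> ?H T0")
    case True
    then obtain T0 where T0: "T0 \<ge> 0" "Z \<le> ?H T0" by blast
    show ?thesis unfolding eventually_at_top_linorder
      using ind_mono[OF A_cont1[OF cec] nn T0(1)] T0 by (intro exI[of _ T0]) (auto intro: order_trans)
  next
    case False
    then have HZ: "\<And>T. T \<ge> 0 \<Longrightarrow> ?H T < Z" by force
    have sm: "smooth_real g1" "smooth_real g2" using cec unfolding complete_end_curve_def by auto
    have g1p: "\<And>t. t \<ge> 0 \<Longrightarrow> g1 t > 0" using cec unfolding complete_end_curve_def by auto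
    define G where "G = exp (ln (g1 0) + Z)"
    have g1b: "g1 T \<le> G" if T: "T \<ge> 0" for T
    proof -
      have der: "((\<lambda>x. ln (g1 x)) has_real_derivative 1 / g1 t * deriv g1 t) (at t)" if "t \<ge> 0" for t
      proof -
        have "(g1 has_real_derivative deriv g1 t) (at t)"
          using sm0[OF sm(1)] DERIV_deriv_iff_real_differentiable by blast
        from DERIV_chain2[OF DERIV_ln_divide[OF g1p[OF that]] this] show ?thesis .
      qed
      have "((\<lambda>t. 1 / g1 t * deriv g1 t) has_integral (ln (g1 T) - ln (g1 0))) {0..T}"
        using T der
        by (intro fundamental_theorem_of_calculus)
           (auto simp: has_real_derivative_iff_has_vector_derivative[symmetric] intro: has_field_derivative_at_within)
      then have e: "ln (g1 T) - ln (g1 0) = integral {0..T} (\<lambda>t. 1 / g1 t * deriv g1 t)"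
        and ii: "(\<lambda>t. 1 / g1 t * deriv g1 t) integrable_on {0..T}"
        by (auto simp: integral_unique has_integral_integrable)
      have "integral {0..T} (\<lambda>t. 1 / g1 t * deriv g1 t) \<le> ?H T"
      proof (rule integral_le[OF ii integrable_continuous_interval[OF A_cont1[OF cec]]])
        fix t assume t: "t \<in> {0..T}"
        have "deriv g1 t \<le> sqrt ((deriv g1 t)\<^sup>2 + (deriv g2 t)\<^sup>2)"
          by (rule real_sqrt_sum_squares_ge1)
        then show "1 / g1 t * deriv g1 t \<le> 1 / Acoef g1 g2 t"
          using invA[OF cec, of t] t g1p[of t] by (simp add: divide_right_mono)
      qed
      then have "ln (g1 T) \<le> ln (g1 0) + Z" using e HZ[OF T] by simp
      then have "exp (ln (g1 T)) \<le> G" unfolding G_def by simp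
      then show ?thesis using g1p[OF T] by simp
    qed
    have Gp: "G > 0" unfolding G_def by simp
    have hb: "integral {0..T} (hyp_speed g1 g2) \<le> G / c * Z" if T: "T \<ge> 0" for T
    proof -
      have "integral {0..T} (hyp_speed g1 g2) \<le> integral {0..T} (\<lambda>t. G / c * (1 / Acoef g1 g2 t))"
      proof (rule integral_le[OF integrable_continuous_interval[OF hyp_cont[OF cec]]])
        show "(\<lambda>t. G / c * (1 / Acoef g1 g2 t)) integrable_on {0..T}"
          using integrable_continuous_interval[OF A_cont[OF cec, of T "G/c" 0]] by (simp add: divide_divide_eq_left)
        fix t assume t: "t \<in> {0..T}"
        define q where "q = sqrt ((deriv g1 t)\<^sup>2 + (deriv g2 t)\<^sup>2)"
        have q: "q \<ge> 0" unfolding q_def by simp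
        have g: "g1 t > 0" "g1 t \<le> G" "g2 t \<ge> c" using g1p[of t] g1b[of t] lb[of t] t by auto
        have "q / g2 t \<le> q / c" using q g c by (intro divide_left_mono) auto
        also have "q / c = G / c * (q / G)" using Gp c by simp
        also have "\<dots> \<le> G / c * (q / g1 t)" using q g c Gp
          by (intro mult_left_mono divide_left_mono) auto
        finally show "hyp_speed g1 g2 t \<le> G / c * (1 / Acoef g1 g2 t)"
          using invA[OF cec, of t] t unfolding hyp_speed_def q_def by simp
      qed
      also have "\<dots> = G / c * ?H T" by (rule integral_mult_right)
      also have "\<dots> \<le> G / c * Z" using HZ[OF T] Gp c by (intro mult_left_mono) auto
      finally show ?thesis .
    qed
    have "eventually (\<lambda>T. G / c * Z + 1 \<le> integral {0..T} (hyp_speed g1 g2)) at_top"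
      using cec unfolding complete_end_curve_def filterlim_at_top by blast
    then obtain N where N: "\<And>T. T \<ge> N \<Longrightarrow> G / c * Z + 1 \<le> integral {0..T} (hyp_speed g1 g2)"
      unfolding eventually_at_top_linorder by blast
    have False using N[of "max N 0"] hb[of "max N 0"] by simp
    then show ?thesis ..
  qed
qed



lemma per_nat: "(\<And>x. f (x + 2*pi) = f x) \<Longrightarrow> f (x + 2*pi*real n) = (f x :: 'a)"
proof (induction n arbitrary: x)
  case 0 then show ?case by simp
next
  case (Suc n)
  have "f (x + 2*pi*real (Suc n)) = f ((x + 2*pi*real n) + 2*pi)" by (simp add: algebra_simps)
  also have "\<dots> = f (x + 2*pi*real n)" using Suc.prems by simp
  finally show ?case using Suc by simp
qed

lemma per_reduce:
  assumes "\<And>x. f (x + 2*pi) = f x"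
  shows "\<exists>t\<in>{0..2*pi}. f t = (f \<theta> :: 'a)"
proof -
  define k where "k = \<lfloor>\<theta> / (2*pi)\<rfloor>"
  define t where "t = \<theta> - 2*pi*real_of_int k"
  have k1: "real_of_int k \<le> \<theta> / (2*pi)" "\<theta> / (2*pi) < real_of_int k + 1"
    unfolding k_def by linarith+
  have "2*pi*real_of_int k \<le> \<theta>" using k1(1) pi_gt_zero by (simp add: field_simps)
  moreover have "\<theta> < 2*pi*(real_of_int k + 1)" using k1(2) pi_gt_zero by (simp add: field_simps)
  ultimately have t: "t \<in> {0..2*pi}" unfolding t_def by (auto simp: algebra_simps)
  have "f t = f \<theta>"
  proof (cases "k \<ge> 0")
    case True
    have "f (t + 2*pi*real (nat k)) = f t" by (rule per_nat[of f, OF assms])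
    moreover have "t + 2*pi*real (nat k) = \<theta>" using True unfolding t_def by simp
    ultimately show ?thesis by simp
  next
    case False
    have "f (\<theta> + 2*pi*real (nat (-k))) = f \<theta>" by (rule per_nat[of f, OF assms])
    moreover have "\<theta> + 2*pi*real (nat (-k)) = t" using False unfolding t_def by simp
    ultimately show ?thesis by simp
  qed
  then show ?thesis using t by blast
qed

lemma lap_expand:
  assumes cec: "complete_end_curve g1 g2" and s: "s > 0"
    and C2: "C2_on u {p. fst p > 0}"
  shows "laplacian_E g1 g2 u (s, \<theta>) =
    (1 / sqrt (G11 g1 g2 s * G22 g1 g2 s)) *
    (deriv (Acoef g1 g2) s * pd_s u (s, \<theta>) + Acoef g1 g2 s * pd_s (pd_s u) (s, \<theta>)
     + Bcoef g1 g2 s * pd_t (pd_t u) (s, \<theta>))"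
proof -
  have hp: "has_partials_on (pd_s u) {p. fst p > 0}" "has_partials_on (pd_t u) {p. fst p > 0}"
    using C2 unfolding C2_on_def by auto
  have d1: "((\<lambda>t. pd_s u (t, \<theta>)) has_real_derivative pd_s (pd_s u) (s, \<theta>)) (at s)"
    using hp(1) s unfolding has_partials_on_def pd_s_def[of "pd_s u"]
    by (auto simp: DERIV_deriv_iff_real_differentiable)
  have d2: "((\<lambda>t. pd_t u (s, t)) has_real_derivative pd_t (pd_t u) (s, \<theta>)) (at \<theta>)"
    using hp(2) s unfolding has_partials_on_def pd_t_def[of "pd_t u"]
    by (auto simp: DERIV_deriv_iff_real_differentiable)
  have dA: "(Acoef g1 g2 has_real_derivative deriv (Acoef g1 g2) s) (at s)"
    using A_diff[OF cec, of s] s by (simp add: DERIV_deriv_iff_real_differentiable)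
  have e1: "pd_s (\<lambda>q. Acoef g1 g2 (fst q) * pd_s u q) (s, \<theta>) =
      deriv (Acoef g1 g2) s * pd_s u (s, \<theta>) + Acoef g1 g2 s * pd_s (pd_s u) (s, \<theta>)"
    unfolding pd_s_def[of "\<lambda>q. Acoef g1 g2 (fst q) * pd_s u q"] fst_conv snd_conv
    by (rule DERIV_imp_deriv) (use DERIV_mult[OF dA d1] in \<open>simp add: algebra_simps\<close>)
  have e2: "pd_t (\<lambda>q. Bcoef g1 g2 (fst q) * pd_t u q) (s, \<theta>) =
      Bcoef g1 g2 s * pd_t (pd_t u) (s, \<theta>)"
    unfolding pd_t_def[of "\<lambda>q. Bcoef g1 g2 (fst q) * pd_t u q"] fst_conv snd_conv
    by (rule DERIV_imp_deriv) (rule DERIV_cmult[OF d2])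
  have "laplacian_E g1 g2 u (s, \<theta>) = (1 / sqrt (G11 g1 g2 s * G22 g1 g2 s)) *
     (pd_s (\<lambda>q. Acoef g1 g2 (fst q) * pd_s u q) (s, \<theta>) +
      pd_t (\<lambda>q. Bcoef g1 g2 (fst q) * pd_t u q) (s, \<theta>))"
    unfolding laplacian_E_def Let_def Acoef_def Bcoef_def by simp
  then show ?thesis unfolding e1 e2 by (simp add: algebra_simps)
qed



lemma maxprin:
  assumes cec: "complete_end_curve g1 g2" and c: "c > 0" and lb: "\<And>s. s \<ge> 0 \<Longrightarrow> g2 s \<ge> c"
    and hu: "bounded_harmonic_on_end g1 g2 u" and hv: "bounded_harmonic_on_end g1 g2 v"
    and bd: "\<And>\<theta>. u (0, \<theta>) = v (0, \<theta>)"
    and p: "fst p \<ge> 0"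
  shows "u p \<le> v p"
proof (rule ccontr)
  assume "\<not> u p \<le> v p"
  obtain s1 \<theta>1 where p_eq: "p = (s1, \<theta>1)" by (cases p)
  define \<eta> where "\<eta> = u p - v p"
  have \<eta>: "\<eta> > 0" using \<open>\<not> u p \<le> v p\<close> unfolding \<eta>_def by simp
  have s1: "s1 > 0"
  proof -
    have "s1 \<noteq> 0" using bd[of \<theta>1] \<eta> unfolding \<eta>_def p_eq by auto
    then show ?thesis using p p_eq by simp
  qed
  have perU: "\<And>s \<theta>. u (s, \<theta> + 2*pi) = u (s, \<theta>)" and perV: "\<And>s \<theta>. v (s, \<theta> + 2*pi) = v (s, \<theta>)"
    and contU: "continuous_on {p. fst p \<ge> 0} u" and contV: "continuous_on {p. fst p \<ge> 0} v"
    and C2u: "C2_on u {p. fst p > 0}" and C2v: "C2_on v {p. fst p > 0}"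
    and lapu: "\<And>p. fst p > 0 \<Longrightarrow> laplacian_E g1 g2 u p = 0"
    and lapv: "\<And>p. fst p > 0 \<Longrightarrow> laplacian_E g1 g2 v p = 0"
    using hu hv unfolding bounded_harmonic_on_end_def by auto
  obtain Bu where Bu: "\<And>p. fst p \<ge> 0 \<Longrightarrow> \<bar>u p\<bar> \<le> Bu"
    using hu unfolding bounded_harmonic_on_end_def by blast
  obtain Bv where Bv: "\<And>p. fst p \<ge> 0 \<Longrightarrow> \<bar>v p\<bar> \<le> Bv"
    using hv unfolding bounded_harmonic_on_end_def by blast
  define B where "B = Bu + Bv"
  have Bb: "u q - v q \<le> B" if "fst q \<ge> 0" for q
    using Bu[OF that] Bv[OF that] unfolding B_def by linarith
  let ?A = "Acoef g1 g2"
  define H where "H = (\<lambda>T. integral {0..T} (\<lambda>t. 1 / ?A t))"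
  define P where "P = (\<lambda>T. integral {0..T} (\<lambda>t. t / ?A t))"
  have cH: "\<And>T. continuous_on {0..T} (\<lambda>t. 1 / ?A t)" by (rule A_cont1[OF cec])
  have cP: "\<And>T. continuous_on {0..T} (\<lambda>t. t / ?A t)" using A_cont[OF cec, of _ 0 1] by simp
  have Apos: "\<And>t. t \<ge> 0 \<Longrightarrow> ?A t > 0" using pos_facts(4)[OF cec] .
  have nH: "\<And>t. t \<ge> 0 \<Longrightarrow> 1 / ?A t \<ge> 0" and nP: "\<And>t. t \<ge> 0 \<Longrightarrow> t / ?A t \<ge> 0"
    using Apos by (auto simp: less_imp_le)
  have H0: "H 0 = 0" and P0: "P 0 = 0" unfolding H_def P_def by auto
  have Hn: "\<And>T. H T \<ge> 0" unfolding H_def by (rule ind_nonneg[OF cH nH])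
  have Pn: "\<And>T. P T \<ge> 0" unfolding P_def by (rule ind_nonneg[OF cP nP])
  have dH: "\<And>t. t > 0 \<Longrightarrow> (H has_real_derivative 1 / ?A t) (at t)"
    unfolding H_def by (rule ind_deriv[OF cH])
  have dP: "\<And>t. t > 0 \<Longrightarrow> (P has_real_derivative t / ?A t) (at t)"
    unfolding P_def by (rule ind_deriv[OF cP])
  define \<epsilon> where "\<epsilon> = \<eta> / (3 * (H s1 + 1))"
  have \<epsilon>: "\<epsilon> > 0" using \<eta> Hn[of s1] unfolding \<epsilon>_def by simp
  have \<epsilon>H: "\<epsilon> * H s1 \<le> \<eta> / 3"
  proof -
    have "\<epsilon> * H s1 \<le> \<epsilon> * (H s1 + 1)" using \<epsilon> by simp
    also have "\<dots> = \<eta> / 3" unfolding \<epsilon>_def using Hn[of s1] by (simp add: field_simps)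
    finally show ?thesis .
  qed
  have "eventually (\<lambda>T. (B + 1) / \<epsilon> \<le> H T) at_top"
    using H_div[OF cec c lb] unfolding H_def filterlim_at_top by blast
  then obtain N where N: "\<And>T. T \<ge> N \<Longrightarrow> (B + 1) / \<epsilon> \<le> H T"
    unfolding eventually_at_top_linorder by blast
  define S where "S = max N (s1 + 1)"
  have S: "S > s1" "(B + 1) / \<epsilon> \<le> H S" using N[of S] unfolding S_def by auto
  have \<epsilon>HS: "\<epsilon> * H S \<ge> B + 1" using S(2) \<epsilon> by (simp add: field_simps)
  define \<delta> where "\<delta> = 1 / (2 * (P S + 1))"
  have \<delta>: "\<delta> > 0" using Pn[of S] unfolding \<delta>_def by simp
  have \<delta>P: "\<delta> * P S \<le> 1 / 2"
  proof -
    have "\<delta> * P S \<le> \<delta> * (P S + 1)" using \<delta> by simp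
    also have "\<dots> = 1 / 2" unfolding \<delta>_def using Pn[of S] by (simp add: field_simps)
    finally show ?thesis .
  qed
  define F where "F = (\<lambda>q. u q - v q - (\<epsilon> * H (fst q) - \<delta> * P (fst q)))"
  define K where "K = {0..S} \<times> {0..2*pi}"
  have Ksub: "K \<subseteq> {p. fst p \<ge> 0}" unfolding K_def by auto
  have cHS: "continuous_on {0..S} H" unfolding H_def
    by (rule indefinite_integral_continuous_1[OF integrable_continuous_interval[OF cH]])
  have cPS: "continuous_on {0..S} P" unfolding P_def
    by (rule indefinite_integral_continuous_1[OF integrable_continuous_interval[OF cP]])
  have fK: "fst ` K \<subseteq> {0..S}" unfolding K_def by auto
  have cF: "continuous_on K F" unfolding F_def
    using continuous_on_subset[OF contU Ksub] continuous_on_subset[OF contV Ksub]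
      continuous_on_compose2[OF cHS continuous_on_fst fK]
      continuous_on_compose2[OF cPS continuous_on_fst fK]
    by (intro continuous_intros) auto
  have "compact K" unfolding K_def by (intro compact_Times compact_Icc)
  moreover have "K \<noteq> {}" unfolding K_def using S s1 by auto
  ultimately obtain m where mK: "m \<in> K" and mmax: "\<And>y. y \<in> K \<Longrightarrow> F y \<le> F m"
    using continuous_attains_sup[OF _ _ cF] by blast
  obtain s \<theta> where m_eq: "m = (s, \<theta>)" by (cases m)
  have perF: "F (t, x + 2*pi) = F (t, x)" for t x unfolding F_def using perU perV by simp
  have allF: "F (t, x) \<le> F m" if "t \<in> {0..S}" for t x
  proof -
    obtain x' where "x' \<in> {0..2*pi}" "F (t, x') = F (t, x)"
      using per_reduce[of "\<lambda>x. F (t, x)" x] perF by blast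
    then show ?thesis using mmax[of "(t, x')"] that unfolding K_def by auto
  qed
  have dP1: "\<delta> * P s1 \<ge> 0" using \<delta> Pn[of s1] by simp
  have "F (s1, \<theta>1) = \<eta> - (\<epsilon> * H s1 - \<delta> * P s1)" unfolding F_def \<eta>_def p_eq by simp
  then have "F (s1, \<theta>1) \<ge> \<eta> - \<eta>/3" using \<epsilon>H dP1 by linarith
  then have Fm: "F m > 0" using allF[of s1 \<theta>1] S s1 \<eta> by auto
  have sS: "s \<in> {0..S}" using mK m_eq unfolding K_def by auto
  have "s \<noteq> 0"
  proof
    assume "s = 0"
    then have "F m = 0" unfolding F_def m_eq using bd H0 P0 by simp
    then show False using Fm by simp
  qed
  moreover have "s \<noteq> S"
  proof
    assume "s = S"
    have "u m - v m \<le> B" using Bb[of m] sS m_eq by simp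
    then have "F m < 0" unfolding F_def using \<open>s = S\<close> m_eq \<epsilon>HS \<delta>P by simp
    then show False using Fm by simp
  qed
  ultimately have s0: "0 < s" "s < S" using sS by auto
  have hpu: "has_partials_on u {p. fst p > 0}" "has_partials_on (pd_s u) {p. fst p > 0}"
      "has_partials_on (pd_t u) {p. fst p > 0}"
    using C2u unfolding C2_on_def by auto
  have hpv: "has_partials_on v {p. fst p > 0}" "has_partials_on (pd_s v) {p. fst p > 0}"
      "has_partials_on (pd_t v) {p. fst p > 0}"
    using C2v unfolding C2_on_def by auto
  have dus: "((\<lambda>t. w (t, y)) has_real_derivative pd_s w (t, y)) (at t)"
    if "has_partials_on w {p. fst p > 0}" "t > 0" for w :: "real \<times> real \<Rightarrow> real" and t y
    using that unfolding has_partials_on_def pd_s_def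
    by (auto simp: DERIV_deriv_iff_real_differentiable)
  have dut: "((\<lambda>x. w (t, x)) has_real_derivative pd_t w (t, x)) (at x)"
    if "has_partials_on w {p. fst p > 0}" "t > 0" for w :: "real \<times> real \<Rightarrow> real" and t x
    using that unfolding has_partials_on_def pd_t_def
    by (auto simp: DERIV_deriv_iff_real_differentiable)
  have th: "pd_t (pd_t u) m - pd_t (pd_t v) m \<le> 0"
  proof -
    have "(\<lambda>x. pd_t u (s, x) - pd_t v (s, x)) \<theta> = 0 \<and> pd_t (pd_t u) (s, \<theta>) - pd_t (pd_t v) (s, \<theta>) \<le> 0"
    proof (rule second_deriv_max[of 1 \<theta> "\<lambda>x. F (s, x)"])
      fix y assume "y \<in> ball \<theta> 1"
      show "((\<lambda>x. F (s, x)) has_real_derivative pd_t u (s, y) - pd_t v (s, y)) (at y)"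
        unfolding F_def fst_conv
        using dut[OF hpu(1) s0(1)] dut[OF hpv(1) s0(1)]
        by (auto intro!: derivative_eq_intros)
      show "F (s, y) \<le> F (s, \<theta>)" using allF[of s y] sS m_eq by simp
    next
      show "((\<lambda>x. pd_t u (s, x) - pd_t v (s, x)) has_real_derivative
          pd_t (pd_t u) (s, \<theta>) - pd_t (pd_t v) (s, \<theta>)) (at \<theta>)"
        using dut[OF hpu(3) s0(1)] dut[OF hpv(3) s0(1)] by (intro DERIV_diff) auto
    qed simp
    then show ?thesis using m_eq by simp
  qed
  define A' where "A' = deriv ?A s"
  have dA: "(?A has_real_derivative A') (at s)"
    using A_diff[OF cec, of s] s0 unfolding A'_def by (simp add: DERIV_deriv_iff_real_differentiable)
  have As: "?A s > 0" using Apos s0 by simp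
  define d1 where "d1 = (0 * ?A s - 1 * A') / (?A s * ?A s)"
  define d2 where "d2 = (1 * ?A s - s * A') / (?A s * ?A s)"
  have dd1: "((\<lambda>t. 1 / ?A t) has_real_derivative d1) (at s)"
    unfolding d1_def by (rule DERIV_divide[OF DERIV_const dA]) (use As in simp)
  have dd2: "((\<lambda>t. t / ?A t) has_real_derivative d2) (at s)"
    unfolding d2_def by (rule DERIV_divide[OF DERIV_ident dA]) (use As in simp)
  have sd: "(\<lambda>t. pd_s u (t, \<theta>) - pd_s v (t, \<theta>) - (\<epsilon> * (1 / ?A t) - \<delta> * (t / ?A t))) s = 0 \<and>
      pd_s (pd_s u) (s, \<theta>) - pd_s (pd_s v) (s, \<theta>) - (\<epsilon> * d1 - \<delta> * d2) \<le> 0"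
  proof (rule second_deriv_max[of "min s (S - s)" s "\<lambda>t. F (t, \<theta>)"])
    show "min s (S - s) > 0" using s0 by simp
    fix y assume y: "y \<in> ball s (min s (S - s))"
    then have y0: "0 < y" "y < S" by (auto simp: dist_real_def)
    show "((\<lambda>t. F (t, \<theta>)) has_real_derivative
        pd_s u (y, \<theta>) - pd_s v (y, \<theta>) - (\<epsilon> * (1 / ?A y) - \<delta> * (y / ?A y))) (at y)"
      unfolding F_def fst_conv
      using dus[OF hpu(1) y0(1)] dus[OF hpv(1) y0(1)] dH[OF y0(1)] dP[OF y0(1)]
      by (intro DERIV_diff DERIV_cmult) auto
    show "F (y, \<theta>) \<le> F (s, \<theta>)" using allF[of y \<theta>] y0 m_eq by simp
  next
    show "((\<lambda>t. pd_s u (t, \<theta>) - pd_s v (t, \<theta>) - (\<epsilon> * (1 / ?A t) - \<delta> * (t / ?A t)))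
        has_real_derivative pd_s (pd_s u) (s, \<theta>) - pd_s (pd_s v) (s, \<theta>) - (\<epsilon> * d1 - \<delta> * d2)) (at s)"
      using dus[OF hpu(2) s0(1)] dus[OF hpv(2) s0(1)] dd1 dd2
      by (intro DERIV_diff DERIV_cmult) auto
  qed
  define sg where "sg = sqrt (G11 g1 g2 s * G22 g1 g2 s)"
  have sgp: "sg > 0" unfolding sg_def using pos_facts(3)[OF cec] s0 by simp
  have Bp: "Bcoef g1 g2 s > 0" using pos_facts(5)[OF cec] s0 by simp
  have Lu: "A' * pd_s u m + ?A s * pd_s (pd_s u) m + Bcoef g1 g2 s * pd_t (pd_t u) m = 0"
    using lap_expand[OF cec s0(1) C2u, of \<theta>] lapu[of m] m_eq s0 pos_facts(1,2)[OF cec, of s]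
    unfolding A'_def by (auto simp: less_imp_le)
  have Lv: "A' * pd_s v m + ?A s * pd_s (pd_s v) m + Bcoef g1 g2 s * pd_t (pd_t v) m = 0"
    using lap_expand[OF cec s0(1) C2v, of \<theta>] lapv[of m] m_eq s0 pos_facts(1,2)[OF cec, of s]
    unfolding A'_def by (auto simp: less_imp_le)
  define ws where "ws = pd_s u m - pd_s v m"
  define wss where "wss = pd_s (pd_s u) m - pd_s (pd_s v) m"
  define wtt where "wtt = pd_t (pd_t u) m - pd_t (pd_t v) m"
  have W: "A' * ws + ?A s * wss + Bcoef g1 g2 s * wtt = 0"
    using Lu Lv unfolding ws_def wss_def wtt_def by (simp add: algebra_simps)
  have ws: "ws = \<epsilon> * (1 / ?A s) - \<delta> * (s / ?A s)" using sd m_eq unfolding ws_def by simp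
  have wss: "wss \<le> \<epsilon> * d1 - \<delta> * d2" using sd m_eq unfolding wss_def by simp
  have wtt: "wtt \<le> 0" using th unfolding wtt_def .
  have "Bcoef g1 g2 s * wtt \<le> 0" using Bp wtt by (simp add: mult_nonneg_nonpos)
  then have "0 \<le> A' * ws + ?A s * wss" using W by linarith
  also have "\<dots> \<le> A' * ws + ?A s * (\<epsilon> * d1 - \<delta> * d2)" using wss As by simp
  also have "\<dots> = -\<delta>" unfolding ws d1_def d2_def using As by (simp add: field_simps)
  finally show False using \<delta> by simp
qed



theorem corollaryE:
  fixes g1 g2 :: "real \<Rightarrow> real"
  assumes "complete_end_curve g1 g2"
    and "\<not> parabolic_end g1 g2"
  shows "(INF p\<in>end_set g1 g2. snd (snd p)) = 0"
proof (rule ccontr)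
  assume ne: "(INF p\<in>end_set g1 g2. snd (snd p)) \<noteq> 0"
  define c where "c = (INF p\<in>end_set g1 g2. snd (snd p))"
  have mem: "(g1 s * cos 0, g1 s * sin 0, g2 s) \<in> end_set g1 g2" if "s \<ge> 0" for s
    unfolding end_set_def using that by (intro CollectI exI[of _ s] exI[of _ 0]) auto
  have pos: "\<And>p. p \<in> end_set g1 g2 \<Longrightarrow> snd (snd p) > 0"
    using assms(1) unfolding end_set_def complete_end_curve_def by auto
  have nemp: "end_set g1 g2 \<noteq> {}" using mem[of 0] by auto
  have bdd: "bdd_below ((\<lambda>p. snd (snd p)) ` end_set g1 g2)"
    using pos by (intro bdd_belowI[of _ 0]) (auto simp: less_imp_le)
  have "c \<ge> 0" unfolding c_def using pos nemp by (intro cINF_greatest) (auto simp: less_imp_le)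
  then have c: "c > 0" using ne c_def by simp
  have lb: "g2 s \<ge> c" if "s \<ge> 0" for s
    using cINF_lower[OF bdd mem[OF that]] unfolding c_def by simp
  have "parabolic_end g1 g2"
    unfolding parabolic_end_def
  proof (intro allI impI)
    fix u v :: "real \<times> real \<Rightarrow> real" and p :: "real \<times> real"
    assume h: "bounded_harmonic_on_end g1 g2 u \<and> bounded_harmonic_on_end g1 g2 v \<and>
        (\<forall>\<theta>. u (0, \<theta>) = v (0, \<theta>))" and p: "fst p \<ge> 0"
    have "u p \<le> v p" using maxprin[OF assms(1) c lb, of u v p] h p by auto
    moreover have "v p \<le> u p" using maxprin[OF assms(1) c lb, of v u p] h p by auto
    ultimately show "u p = v p" by simp
  qed
  then show False using assms(2) by simp
qed

end
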